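(* Let $X\in\mathbb{R}^p$ have distribution function $F$. Let $f(\cdot;\boldsymbol{\mu},\boldsymbol{\Sigma})$ be a family of probability densities on $\mathbb{R}^p$ indexed by $\boldsymbol{\mu}\in\mathbb{R}^p$ and positive definite $\boldsymbol{\Sigma}\in\mathbb{R}^{p\times p}$, and let $\phi(\cdot;\boldsymbol{\mu},\boldsymbol{\Sigma})$ denote the $N_p(\boldsymbol{\mu},\boldsymbol{\Sigma})$ density. Let $\mathcal{M}$ be a set of cluster configurations; each $m\in\mathcal{M}$ is a parameter $\boldsymbol{\theta}^{(m)}=\{(\pi_k^{(m)},\boldsymbol{\mu}_k^{(m)},\boldsymbol{\Sigma}_k^{(m)})\}_{k=1}^{K(\boldsymbol{\theta}^{(m)})}$ with $\pi_k^{(m)}>0$, $\boldsymbol{\mu}_k^{(m)}\in\mathbb{R}^p$, $\boldsymbol{\Sigma}_k^{(m)}$ positive definite. For such $\boldsymbol{\theta}$ define the quadratic score $\mathrm{qs}(\mathbf{x};\boldsymbol{\theta}_k)=\log\pi_k-\tfrac12\log\det\boldsymbol{\Sigma}_k-\tfrac12(\mathbf{x}-\boldsymbol{\mu}_k)^\top\boldsymbol{\Sigma}_k^{-1}(\mathbf{x}-\boldsymbol{\mu}_k)$, the sets $Q_k(\boldsymbol{\theta})=\{\mathbf{x}:\mathrm{qs}(\mathbf{x};\boldsymbol{\theta}_k)=\max_{1\le j\le K(\boldsymbol{\theta})}\mathrm{qs}(\mathbf{x};\boldsymbol{\theta}_j)\}$ (assumed to form a partition of $\mathbb{R}^p$),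 and $$L(\boldsymbol{\theta})=\sum_{k=1}^{K(\boldsymbol{\theta})}\int_{Q_k(\boldsymbol{\theta})}\log\big(\pi_k f(\mathbf{x};\boldsymbol{\mu}_k,\boldsymbol{\Sigma}_k)\big)\,dF,\qquad H(\boldsymbol{\theta})=\sum_{k=1}^{K(\boldsymbol{\theta})}\int_{Q_k(\boldsymbol{\theta})}\mathrm{qs}(\mathbf{x};\boldsymbol{\theta}_k)\,dF.$$ Assume all these integrals exist and that (C3) $\inf_{m\in\mathcal{M}}\Big\{\int_{Q_k(\boldsymbol{\theta}^{(m)})}\log f(\mathbf{x};\boldsymbol{\mu}_k^{(m)},\boldsymbol{\Sigma}_k^{(m)})\,dF-\int_{Q_k(\boldsymbol{\theta}^{(m)})}\log\phi(\mathbf{x};\boldsymbol{\mu}_k^{(m)},\boldsymbol{\Sigma}_k^{(m)})\,dF\Big\}\ge 0$ for all $k=1,\dots,K(\boldsymbol{\theta}^{(m)})$. Then for every $m\in\mathcal{M}$, $$H(\boldsymbol{\theta}^{(m)})=c+L(\boldsymbol{\theta}^{(m)})-\Lambda(\boldsymbol{\theta}^{(m)}),$$ where $c$ is a positive constant (not depending on $m$) and $$\Lambda(\boldsymbol{\theta}^{(m)})=\sum_{k=1}^{K(\boldsymbol{\theta}^{(m)})}\int_{Q_k(\boldsymbol{\theta}^{(m)})}\log\!\left(\frac{f(\mathbf{x};\boldsymbol{\mu}_k^{(m)},\boldsymbol{\Sigma}_k^{(m)})}{\phi(\mathbf{x};\boldsymbol{\mu}_k^{(m)},\boldsymbol{\Sigma}_k^{(m)})}\right)dF\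 \ge 0.$$
   Context: $K(\boldsymbol{\theta})$ denotes the number of groups described by a configuration $\boldsymbol{\theta}$; $\boldsymbol{\theta}_k=(\pi_k,\boldsymbol{\mu}_k,\boldsymbol{\Sigma}_k)$ represents size, center and scatter of the $k$-th cluster. $H$ is the population hard score criterion and $L$ the population partition log-likelihood-type criterion. *)

theory Defs
  imports "HOL-Probability.Probability"
begin

definition pos_def :: "real^'n^'n \<Rightarrow> bool" where
  "pos_def S \<longleftrightarrow> transpose S = S \<and> (\<forall>x. x \<noteq> 0 \<longrightarrow> x \<bullet> (S *v x) > 0)"

definition gauss_dens :: "real^'n \<Rightarrow> real^'n \<Rightarrow> real^'n^'n \<Rightarrow> real" where
  "gauss_dens x mu S =
     exp (- (1/2) * ((x - mu) \<bullet> (matrix_inv S *v (x - mu))))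
     / sqrt ((2 * pi) ^ CARD('n) * det S)"

text \<open>A cluster configuration: list of components (pi_k, mu_k, Sigma_k); K(theta) = length.\<close>
type_synonym 'n config = "(real \<times> (real^'n) \<times> (real^'n^'n)) list"

definition K :: "('n::finite) config \<Rightarrow> nat" where
  "K th = length th"

definition valid_config :: "('n::finite) config \<Rightarrow> bool" where
  "valid_config th \<longleftrightarrow> (\<forall>(p, mu, S) \<in> set th. p > 0 \<and> pos_def S)"

definition cw :: "('n::finite) config \<Rightarrow> nat \<Rightarrow> real" where "cw th k = fst (th ! k)"
definition cmu :: "('n::finite) config \<Rightarrow> nat \<Rightarrow> real^'n" where "cmu th k = fst (snd (th ! k))"
definition cSig :: "('n::finite) config \<Rightarrow> nat \<Rightarrow> real^'n^'n" where "cSig th k = snd (snd (th ! k))"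

definition qs :: "real^'n \<Rightarrow> real \<times> (real^'n) \<times> (real^'n^'n) \<Rightarrow> real" where
  "qs x c = (case c of (p, mu, S) \<Rightarrow>
     ln p - (1/2) * ln (det S) - (1/2) * ((x - mu) \<bullet> (matrix_inv S *v (x - mu))))"

definition Qset :: "('n::finite) config \<Rightarrow> nat \<Rightarrow> (real^'n) set" where
  "Qset th k = {x. qs x (th ! k) = Max {qs x (th ! j) | j. j < K th}}"

definition Lcrit :: "(real^'n) measure \<Rightarrow> (real^'n \<Rightarrow> real^'n \<Rightarrow> real^'n^'n \<Rightarrow> real)
    \<Rightarrow> ('n::finite) config \<Rightarrow> real" where
  "Lcrit F f th = (\<Sum>k<K th. LINT x:Qset th k|F. ln (cw th k * f x (cmu th k) (cSig th k)))"

definition Hcrit :: "(real^'n) measure \<Rightarrow> ('n::finite) config \<Rightarrow> real" where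
  "Hcrit F th = (\<Sum>k<K th. LINT x:Qset th k|F. qs x (th ! k))"

definition Lambda :: "(real^'n) measure \<Rightarrow> (real^'n \<Rightarrow> real^'n \<Rightarrow> real^'n^'n \<Rightarrow> real)
    \<Rightarrow> ('n::finite) config \<Rightarrow> real" where
  "Lambda F f th = (\<Sum>k<K th. LINT x:Qset th k|F.
      ln (f x (cmu th k) (cSig th k) / gauss_dens x (cmu th k) (cSig th k)))"

end

theory Submission
  imports Defs
begin

lemma pos_def_det:
  fixes S :: "real^'n^'n"
  assumes "pos_def S" shows "det S > 0"
proof (rule ccontr)
  assume "\<not> det S > 0"
  define M where "M t = t *\<^sub>R S + (1 - t) *\<^sub>R (mat 1 :: real^'n^'n)" for t :: real
  have cont: "continuous_on {0..1} (\<lambda>t. det (M t))"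
  proof -
    have e: "(\<lambda>t. det (M t)) = (\<lambda>t. \<Sum>p\<in>{p. p permutes (UNIV::'n set)}. of_int (sign p) * (\<Prod>i\<in>UNIV. t * S$i$p i + (1-t) * (mat 1::real^'n^'n)$i$p i))"
      by (simp add: M_def det_def)
    show ?thesis unfolding e by (intro continuous_intros)
  qed
  have "det (M 0) = 1" by (simp add: M_def)
  moreover have "det (M 1) \<le> 0" using \<open>\<not> det S > 0\<close> by (simp add: M_def)
  ultimately obtain t where t: "t \<in> {0..1}" "det (M t) = 0"
    using IVT2'[of "\<lambda>t. det (M t)" 1 0 0] cont by force
  then have "\<not> invertible (M t)" using invertible_det_nz by blast
  then have "\<not> (\<exists>B. B ** M t = mat 1)" using invertible_left_inverse by blast
  then obtain x where x: "M t *v x = 0" "x \<noteq> 0" using matrix_left_invertible_ker by blast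
  have "x \<bullet> (M t *v x) = t * (x \<bullet> (S *v x)) + (1 - t) * (x \<bullet> x)"
    by (simp add: M_def matrix_vector_mult_add_rdistrib scaleR_matrix_vector_assoc[symmetric] inner_add_right)
  moreover have "t * (x \<bullet> (S *v x)) + (1 - t) * (x \<bullet> x) > 0"
  proof -
    have a: "x \<bullet> (S *v x) > 0" using assms x(2) unfolding pos_def_def by blast
    have b: "x \<bullet> x > 0" using x(2) by simp
    show ?thesis
    proof (cases "t = 0")
      case True then show ?thesis using b by simp
    next
      case False then have "t > 0" using t by simp
      then have "t * (x \<bullet> (S *v x)) > 0" using a by simp
      moreover have "(1 - t) * (x \<bullet> x) \<ge> 0" using b t by simp
      ultimately show ?thesis by linarith
    qed
  qed
  ultimately show False using x(1) by simp
qed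

lemma pointwise:
  fixes S :: "real^'n^'n"
  assumes w: "w > 0" and y: "y > 0" and dS: "det S > 0"
  shows "qs x (w, mu, S) = real CARD('n) / 2 * ln (2 * pi) + ln (w * y) - ln (y / gauss_dens x mu S)"
    and "ln (y / gauss_dens x mu S) = ln y - ln (gauss_dens x mu S)"
proof -
  define q where "q = (x - mu) \<bullet> (matrix_inv S *v (x - mu))"
  define A where "A = (2 * pi) ^ CARD('n) * det S"
  have A: "A > 0" using dS by (simp add: A_def)
  have g: "gauss_dens x mu S = exp (- (1/2) * q) / sqrt A" by (simp add: gauss_dens_def q_def A_def)
  have gp: "gauss_dens x mu S > 0" using A g by simp
  have lnA: "ln A = real CARD('n) * ln (2 * pi) + ln (det S)"
    using dS by (simp add: A_def ln_mult ln_realpow algebra_simps)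
  have lsq: "ln (sqrt A) = ln A / 2" using A by (simp add: ln_sqrt)
  have lg: "ln (gauss_dens x mu S) = - (1/2) * q - ln A / 2"
    using A by (simp add: g ln_div lsq)
  show "ln (y / gauss_dens x mu S) = ln y - ln (gauss_dens x mu S)" using y gp by (simp add: ln_div)
  then show "qs x (w, mu, S) = real CARD('n) / 2 * ln (2 * pi) + ln (w * y) - ln (y / gauss_dens x mu S)"
  proof -
    have qsq: "qs x (w, mu, S) = ln w - 1/2 * ln (det S) - 1/2 * q" by (simp add: qs_def q_def)
    assume h: "ln (y / gauss_dens x mu S) = ln y - ln (gauss_dens x mu S)"
    show ?thesis unfolding qsq h using w y by (simp add: ln_mult lg lnA algebra_simps)
  qed
qed

lemma qs_meas: "(\<lambda>x. qs x c) \<in> borel_measurable borel"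
proof -
  obtain p mu S where c: "c = (p, mu, S)" by (cases c) auto
  have "continuous_on UNIV (\<lambda>x. qs x c)"
    unfolding c qs_def prod.case
    by (intro continuous_intros bounded_linear.continuous_on[OF matrix_vector_mul_bounded_linear])
  then show ?thesis by (rule borel_measurable_continuous_onI)
qed

lemma Qset_meas: "Qset th k \<in> sets borel"
proof -
  have e: "{qs x (th ! j) | j. j < K th} = (\<lambda>j. qs x (th ! j)) ` {..<K th}" for x by auto
  have "Qset th k = {x \<in> space borel. qs x (th ! k) = Max ((\<lambda>j. qs x (th ! j)) ` {..<K th})}"
    unfolding Qset_def e by simp
  also have "\<dots> \<in> sets borel"
    by (intro measurable_equality_set qs_meas borel_measurable_Max) auto
  finally show ?thesis .
qed

theorem proposition2:
  fixes F :: "(real^'n) measure"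
    and f :: "real^'n \<Rightarrow> real^'n \<Rightarrow> real^'n^'n \<Rightarrow> real"
    and Ms :: "'n config set"
  assumes F: "prob_space F" "sets F = sets borel"
    and f_dens: "\<And>mu S. pos_def S \<Longrightarrow>
        (\<lambda>x. f x mu S) \<in> borel_measurable borel \<and> (\<forall>x. f x mu S \<ge> 0) \<and>
        integral\<^sup>L lborel (\<lambda>x. f x mu S) = 1"
    and valid: "\<And>th. th \<in> Ms \<Longrightarrow> valid_config th"
    and partition: "\<And>th. th \<in> Ms \<Longrightarrow>
        (\<Union>k<K th. Qset th k) = UNIV \<and> disjoint_family_on (Qset th) {..<K th}"
    and f_pos: "\<And>th k. th \<in> Ms \<Longrightarrow> k < K th \<Longrightarrow>
        AE x in F. f x (cmu th k) (cSig th k) > 0"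
    and integrable: "\<And>th k. th \<in> Ms \<Longrightarrow> k < K th \<Longrightarrow>
        set_integrable F (Qset th k) (\<lambda>x. ln (cw th k * f x (cmu th k) (cSig th k))) \<and>
        set_integrable F (Qset th k) (\<lambda>x. qs x (th ! k)) \<and>
        set_integrable F (Qset th k) (\<lambda>x. ln (f x (cmu th k) (cSig th k))) \<and>
        set_integrable F (Qset th k) (\<lambda>x. ln (gauss_dens x (cmu th k) (cSig th k))) \<and>
        set_integrable F (Qset th k)
          (\<lambda>x. ln (f x (cmu th k) (cSig th k) / gauss_dens x (cmu th k) (cSig th k)))"
    and C3: "\<And>th k. th \<in> Ms \<Longrightarrow> k < K th \<Longrightarrow>
        (LINT x:Qset th k|F. ln (f x (cmu th k) (cSig th k)))
          - (LINT x:Qset th k|F. ln (gauss_dens x (cmu th k) (cSig th k))) \<ge> 0"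
  shows "\<exists>c > 0. \<forall>th \<in> Ms.
           Hcrit F th = c + Lcrit F f th - Lambda F f th \<and> Lambda F f th \<ge> 0"
  proof -
  define c where "c = real CARD('n) / 2 * ln (2 * pi)"
  have "ln (2 * pi) > 0" using pi_gt3 by simp
  then have cpos: "c > 0" unfolding c_def by simp
  interpret prob_space F by (rule F(1))
  have spF: "space F = UNIV" using sets_eq_imp_space_eq[OF F(2)] by simp
  have key: "(LINT x:Qset th k|F. qs x (th ! k)) =
      measure F (Qset th k) * c + (LINT x:Qset th k|F. ln (cw th k * f x (cmu th k) (cSig th k)))
      - (LINT x:Qset th k|F. ln (f x (cmu th k) (cSig th k) / gauss_dens x (cmu th k) (cSig th k)))
    \<and> (LINT x:Qset th k|F. ln (f x (cmu th k) (cSig th k) / gauss_dens x (cmu th k) (cSig th k))) \<ge> 0"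
    if th: "th \<in> Ms" and k: "k < K th" for th k
  proof -
    obtain w mu S where thk: "th ! k = (w, mu, S)" by (cases "th ! k") auto
    have mem: "th ! k \<in> set th" using k by (simp add: K_def)
    have w: "w > 0" and pS: "pos_def S"
      using valid[OF th] mem thk unfolding valid_config_def by auto
    have cw: "cw th k = w" "cmu th k = mu" "cSig th k = S"
      by (simp_all add: cw_def cmu_def cSig_def thk)
    have dS: "det S > 0" by (rule pos_def_det[OF pS])
    let ?Q = "Qset th k"
    have Qm: "?Q \<in> sets F" using Qset_meas F(2) by simp
    note I = integrable[OF th k, unfolded cw thk]
    note C = C3[OF th k, unfolded cw]
    have ae: "AE x in F. f x mu S > 0" using f_pos[OF th k] by (simp add: cw)
    have ae1: "AE x in F. qs x (w, mu, S) = c + ln (w * f x mu S) - ln (f x mu S / gauss_dens x mu S)"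
      using ae by eventually_elim (simp add: pointwise(1)[OF w _ dS] c_def)
    have ae2: "AE x in F. ln (f x mu S / gauss_dens x mu S) = ln (f x mu S) - ln (gauss_dens x mu S)"
      using ae by eventually_elim (simp add: pointwise(2)[OF w _ dS])
    have ic: "set_integrable F ?Q (\<lambda>_. c)"
      unfolding set_integrable_def using Qm by (intro integrable_indicator) (auto simp: less_top[symmetric])
    have i2: "set_integrable F ?Q (\<lambda>x. c + ln (w * f x mu S) - ln (f x mu S / gauss_dens x mu S))"
      using ic I by auto
    have i3: "set_integrable F ?Q (\<lambda>x. ln (f x mu S) - ln (gauss_dens x mu S))"
      using I by auto
    have "(LINT x:?Q|F. qs x (w, mu, S)) = (LINT x:?Q|F. c + ln (w * f x mu S) - ln (f x mu S / gauss_dens x mu S))"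
      unfolding set_lebesgue_integral_def
    proof (rule integral_cong_AE)
      show "(\<lambda>x. indicator ?Q x *\<^sub>R qs x (w, mu, S)) \<in> borel_measurable F"
        using I unfolding set_integrable_def by (blast dest: borel_measurable_integrable)
      show "(\<lambda>x. indicator ?Q x *\<^sub>R (c + ln (w * f x mu S) - ln (f x mu S / gauss_dens x mu S))) \<in> borel_measurable F"
        using i2 unfolding set_integrable_def by (blast dest: borel_measurable_integrable)
      show "AE x in F. indicator ?Q x *\<^sub>R qs x (w, mu, S) = indicator ?Q x *\<^sub>R (c + ln (w * f x mu S) - ln (f x mu S / gauss_dens x mu S))"
        using ae1 by eventually_elim simp
    qed
    also have "\<dots> = measure F ?Q * c + (LINT x:?Q|F. ln (w * f x mu S)) - (LINT x:?Q|F. ln (f x mu S / gauss_dens x mu S))"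
      using ic I Qm by (simp add: set_integral_const)
    finally have e1: "(LINT x:?Q|F. qs x (w, mu, S)) = measure F ?Q * c + (LINT x:?Q|F. ln (w * f x mu S)) - (LINT x:?Q|F. ln (f x mu S / gauss_dens x mu S))" .
    have "(LINT x:?Q|F. ln (f x mu S / gauss_dens x mu S)) = (LINT x:?Q|F. ln (f x mu S) - ln (gauss_dens x mu S))"
      unfolding set_lebesgue_integral_def
    proof (rule integral_cong_AE)
      show "(\<lambda>x. indicator ?Q x *\<^sub>R ln (f x mu S / gauss_dens x mu S)) \<in> borel_measurable F"
        using I unfolding set_integrable_def by (blast dest: borel_measurable_integrable)
      show "(\<lambda>x. indicator ?Q x *\<^sub>R (ln (f x mu S) - ln (gauss_dens x mu S))) \<in> borel_measurable F"
        using i3 unfolding set_integrable_def by (blast dest: borel_measurable_integrable)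
      show "AE x in F. indicator ?Q x *\<^sub>R ln (f x mu S / gauss_dens x mu S) = indicator ?Q x *\<^sub>R (ln (f x mu S) - ln (gauss_dens x mu S))"
        using ae2 by eventually_elim simp
    qed
    also have "\<dots> = (LINT x:?Q|F. ln (f x mu S)) - (LINT x:?Q|F. ln (gauss_dens x mu S))"
      using I by simp
    finally have e2: "(LINT x:?Q|F. ln (f x mu S / gauss_dens x mu S)) \<ge> 0" using C by simp
    show ?thesis using e1 e2 by (simp add: cw thk)
  qed
  show ?thesis
  proof (intro exI[of _ c] conjI cpos ballI)
    fix th assume th: "th \<in> Ms"
    have sm: "(\<Sum>k<K th. measure F (Qset th k)) = 1"
    proof -
      have "(\<Sum>k<K th. measure F (Qset th k)) = measure F (\<Union>k<K th. Qset th k)"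
        using partition[OF th] Qset_meas F(2)
        by (intro finite_measure_finite_Union[symmetric]) auto
      also have "\<dots> = 1" using partition[OF th] spF prob_space by simp
      finally show ?thesis .
    qed
    have "Hcrit F th = (\<Sum>k<K th. measure F (Qset th k) * c + (LINT x:Qset th k|F. ln (cw th k * f x (cmu th k) (cSig th k)))
      - (LINT x:Qset th k|F. ln (f x (cmu th k) (cSig th k) / gauss_dens x (cmu th k) (cSig th k))))"
      unfolding Hcrit_def using key[OF th] by (intro sum.cong) auto
    also have "\<dots> = (\<Sum>k<K th. measure F (Qset th k)) * c + Lcrit F f th - Lambda F f th"
      unfolding Lcrit_def Lambda_def by (simp add: sum.distrib sum_subtractf sum_distrib_right)
    finally show "Hcrit F th = c + Lcrit F f th - Lambda F f th" using sm by simp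
    show "Lambda F f th \<ge> 0" unfolding Lambda_def using key[OF th] by (intro sum_nonneg) auto
  qed
qed

end
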